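(* Let $K$ be a Markov kernel on $\mathbb{R}$ such that $Kf\in\mathcal{C}_0(\mathbb{R})$ for every $f\in\mathcal{C}_0(\mathbb{R})$ and $Kf$ is bounded non-decreasing for every bounded non-decreasing Borel $f:\mathbb{R}\to\mathbb{R}$. Then for all $u,v\in\mathbb{R}$ and every $f\in\mathcal{C}_{u,v}(\mathbb{R})$, one has $Kf\in\mathcal{C}_{u,v}(\mathbb{R})$.
   Context: $\mathcal{C}_0(\mathbb{R})$ is the space of continuous functions vanishing at $\pm\infty$. For $u,v\in\mathbb{R}$, $\mathcal{C}_{u,v}(\mathbb{R})$ is the set of continuous $f:\mathbb{R}\to\mathbb{R}$ with $\lim_{x\to-\infty}f(x)=u$ and $\lim_{x\to+\infty}f(x)=v$. $Kf(x)=\int f(y)K(x,dy)$. *)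

theory Defs
  imports "HOL-Probability.Probability"
begin

definition markov_kernel_R :: "(real \<Rightarrow> real measure) \<Rightarrow> bool" where
  "markov_kernel_R K \<longleftrightarrow> K \<in> borel \<rightarrow>\<^sub>M prob_algebra borel"

definition kernel_apply :: "(real \<Rightarrow> real measure) \<Rightarrow> (real \<Rightarrow> real) \<Rightarrow> real \<Rightarrow> real" where
  "kernel_apply K f x = (\<integral>y. f y \<partial>(K x))"

definition C0 :: "(real \<Rightarrow> real) set" where
  "C0 = {f. continuous_on UNIV f \<and> (f \<longlongrightarrow> 0) at_bot \<and> (f \<longlongrightarrow> 0) at_top}"

definition Cuv :: "real \<Rightarrow> real \<Rightarrow> (real \<Rightarrow> real) set" where
  "Cuv u v = {f. continuous_on UNIV f \<and> (f \<longlongrightarrow> u) at_bot \<and> (f \<longlongrightarrow> v) at_top}"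

end

theory Submission
  imports Defs
begin

definition bump :: "real \<Rightarrow> real \<Rightarrow> real \<Rightarrow> real" where
  "bump a b y = max 0 (min 1 (min (y - a + 1) (b + 1 - y)))"

lemma bump_cont: "continuous_on UNIV (bump a b)"
  unfolding bump_def by (intro continuous_intros)

lemma bump_meas: "bump a b \<in> borel_measurable borel"
  by (rule borel_measurable_continuous_onI[OF bump_cont])

lemma bump_bounds: "0 \<le> bump a b y" "bump a b y \<le> 1" "\<bar>bump a b y\<bar> \<le> 1"
  unfolding bump_def by auto

lemma bump_one: "a \<le> y \<Longrightarrow> y \<le> b \<Longrightarrow> bump a b y = 1"
  unfolding bump_def by auto

lemma C0_vanish:
  fixes g :: "real \<Rightarrow> real"
  assumes "continuous_on UNIV g" "\<And>y. y \<le> a - 1 \<Longrightarrow> g y = 0" "\<And>y. y \<ge> b + 1 \<Longrightarrow> g y = 0"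
  shows "g \<in> C0"
proof -
  have "eventually (\<lambda>y. 0 = g y) at_bot"
    using assms(2) by (auto simp: eventually_at_bot_linorder)
  hence 1: "(g \<longlongrightarrow> 0) at_bot" by (rule Lim_transform_eventually[OF tendsto_const])
  have "eventually (\<lambda>y. 0 = g y) at_top"
    using assms(3) by (auto simp: eventually_at_top_linorder)
  hence 2: "(g \<longlongrightarrow> 0) at_top" by (rule Lim_transform_eventually[OF tendsto_const])
  show ?thesis using assms(1) 1 2 unfolding C0_def by auto
qed

lemma bump_C0: "bump a b \<in> C0"
  by (rule C0_vanish[OF bump_cont, where a=a and b=b]) (auto simp: bump_def)

lemma bump_mult_C0:
  fixes f :: "real \<Rightarrow> real"
  assumes "continuous_on UNIV f"
  shows "(\<lambda>y. f y * bump a b y) \<in> C0"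
  by (rule C0_vanish[where a=a and b=b], rule continuous_on_mult[OF assms bump_cont]) (auto simp: bump_def)

lemma C0_isCont: "g \<in> C0 \<Longrightarrow> isCont g x"
  unfolding C0_def by (simp add: continuous_on_eq_continuous_at)

context
  fixes K :: "real \<Rightarrow> real measure"
  assumes mk: "markov_kernel_R K"
begin

lemma Kx: "prob_space (K x) \<and> sets (K x) = sets borel"
  using measurable_space[OF mk[unfolded markov_kernel_R_def], of x]
  by (simp add: space_prob_algebra)

lemma Kdist: "real_distribution (K x)"
  using Kx[of x] by (simp add: real_distribution_def real_distribution_axioms_def)

lemma Kspace[simp]: "space (K x) = UNIV"
  using Kx[of x] sets_eq_imp_space_eq by fastforce

lemma Kint:
  fixes h g :: "real \<Rightarrow> real" and B C :: real
  assumes "h \<in> borel_measurable borel" "\<And>y. \<bar>h y\<bar> \<le> B"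
  shows "integrable (K x) h"
proof -
  interpret prob_space "K x" using Kx by auto
  show ?thesis
    apply (rule integrable_const_bound[where B=B])
    using assms measurable_cong_sets[OF Kx[THEN conjunct2] refl, of x] by auto
qed

lemma Kmono:
  fixes h g :: "real \<Rightarrow> real" and B C :: real
  assumes "h \<in> borel_measurable borel" "\<And>y. \<bar>h y\<bar> \<le> B"
    "g \<in> borel_measurable borel" "\<And>y. \<bar>g y\<bar> \<le> C" "\<And>y. h y \<le> g y"
  shows "kernel_apply K h x \<le> kernel_apply K g x"
  unfolding kernel_apply_def
  by (rule integral_mono[OF Kint[OF assms(1,2)] Kint[OF assms(3,4)]]) (use assms in auto)

lemma Kadd:
  fixes h g :: "real \<Rightarrow> real" and B C :: real
  assumes "h \<in> borel_measurable borel" "\<And>y. \<bar>h y\<bar> \<le> B"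
    "g \<in> borel_measurable borel" "\<And>y. \<bar>g y\<bar> \<le> C"
  shows "kernel_apply K (\<lambda>y. h y + g y) x = kernel_apply K h x + kernel_apply K g x"
  unfolding kernel_apply_def
  by (rule Bochner_Integration.integral_add[OF Kint[OF assms(1,2)] Kint[OF assms(3,4)]])

lemma Kdiff:
  fixes h g :: "real \<Rightarrow> real" and B C :: real
  assumes "h \<in> borel_measurable borel" "\<And>y. \<bar>h y\<bar> \<le> B"
    "g \<in> borel_measurable borel" "\<And>y. \<bar>g y\<bar> \<le> C"
  shows "kernel_apply K (\<lambda>y. h y - g y) x = kernel_apply K h x - kernel_apply K g x"
  unfolding kernel_apply_def
  by (rule Bochner_Integration.integral_diff[OF Kint[OF assms(1,2)] Kint[OF assms(3,4)]])

lemma Kcmult: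
  shows "kernel_apply K (\<lambda>y. c * h y) x = c * kernel_apply K h x"
  unfolding kernel_apply_def by simp

lemma Kconst: "kernel_apply K (\<lambda>y. c) x = c"
proof -
  interpret prob_space "K x" using Kx by auto
  show ?thesis unfolding kernel_apply_def using prob_space by simp
qed

lemma Kabs:
  fixes h g :: "real \<Rightarrow> real" and B C :: real
  assumes "h \<in> borel_measurable borel" "\<And>y. \<bar>h y\<bar> \<le> B"
  shows "\<bar>kernel_apply K h x\<bar> \<le> kernel_apply K (\<lambda>y. \<bar>h y\<bar>) x"
  unfolding kernel_apply_def by (rule integral_abs_bound)

lemma Kind: "kernel_apply K (indicator {..a}) x = cdf (K x) a"
  unfolding kernel_apply_def cdf_def by simp


lemma ind_meas1: "(indicator {..a} :: real \<Rightarrow> real) \<in> borel_measurable borel" by simp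
lemma ind_meas2: "(indicator {a<..} :: real \<Rightarrow> real) \<in> borel_measurable borel" by simp

lemma Kind_compl: "kernel_apply K (indicator {..a}) x = 1 - kernel_apply K (indicator {a<..}) x"
proof -
  have "kernel_apply K (\<lambda>y. 1 - indicator {a<..} y) x = 1 - kernel_apply K (indicator {a<..}) x"
    by (subst Kdiff[where B=1 and C=1]) (auto simp: indicator_def Kconst)
  moreover have "(\<lambda>y. 1 - indicator {a<..} y) = (indicator {..a} :: real \<Rightarrow> real)"
    by (auto simp: indicator_def)
  ultimately show ?thesis by simp
qed

lemma Kcont:
  fixes f :: "real \<Rightarrow> real"
  assumes C0p: "\<And>f. f \<in> C0 \<Longrightarrow> kernel_apply K f \<in> C0"
    and fc: "continuous_on UNIV f" and fB: "\<And>y. \<bar>f y\<bar> \<le> B" and Bpos: "B > 0"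
  shows "isCont (kernel_apply K f) x0"
  unfolding isCont_def tendsto_iff
proof (intro allI impI)
  fix e :: real assume e: "e > 0"
  define \<epsilon> where "\<epsilon> = e / (6 * B + 6)"
  have \<epsilon>: "\<epsilon> > 0" using e Bpos by (simp add: \<epsilon>_def)
  have fm: "f \<in> borel_measurable borel" by (rule borel_measurable_continuous_onI[OF fc])
  interpret D: real_distribution "K x0" by (rule Kdist)
  have "eventually (\<lambda>a. cdf (K x0) a < \<epsilon>) at_bot"
    using D.cdf_lim_at_bot \<epsilon> by (rule order_tendstoD)
  then obtain N1 where N1: "\<And>a. a \<le> N1 \<Longrightarrow> cdf (K x0) a < \<epsilon>"
    by (auto simp: eventually_at_bot_linorder)
  have "eventually (\<lambda>a. cdf (K x0) a > 1 - \<epsilon>) at_top"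
    using D.cdf_lim_at_top_prob \<epsilon> by (intro order_tendstoD) auto
  then obtain N2 where N2: "\<And>a. a \<ge> N2 \<Longrightarrow> cdf (K x0) a > 1 - \<epsilon>"
    by (auto simp: eventually_at_top_linorder)
  define R where "R = max (max (- N1) N2) 1"
  have R1: "cdf (K x0) (-R) < \<epsilon>" by (rule N1) (simp add: R_def)
  have R2: "cdf (K x0) R > 1 - \<epsilon>" by (rule N2) (simp add: R_def)
  define \<psi> where "\<psi> = bump (-R) R"
  have Rpos: "R \<ge> 1" by (simp add: R_def)
  have \<psi>1: "\<psi> y = 1" if "-R \<le> y" "y \<le> R" for y unfolding \<psi>_def using that by (rule bump_one)
  have \<psi>m: "\<psi> \<in> borel_measurable borel" unfolding \<psi>_def by (rule bump_meas)
  have \<psi>b: "\<bar>\<psi> y\<bar> \<le> 1" "0 \<le> \<psi> y" "\<psi> y \<le> 1" for y unfolding \<psi>_def using bump_bounds by auto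
  have "kernel_apply K (\<lambda>y. indicator {..R} y - indicator {..-R} y) x0 \<le> kernel_apply K \<psi> x0"
    by (rule Kmono[where B=1 and C=1])
       (use \<psi>m \<psi>b Rpos \<psi>1 in \<open>auto simp: indicator_def\<close>)
  moreover have "kernel_apply K (\<lambda>y. indicator {..R} y - indicator {..-R} y) x0
      = cdf (K x0) R - cdf (K x0) (-R)"
    by (subst Kdiff[where B=1 and C=1]) (auto simp: Kind indicator_def)
  ultimately have \<psi>x0: "kernel_apply K \<psi> x0 > 1 - 2 * \<epsilon>" using R1 R2 by linarith
  have "isCont (kernel_apply K \<psi>) x0" unfolding \<psi>_def by (rule C0_isCont[OF C0p[OF bump_C0]])
  hence "eventually (\<lambda>x. kernel_apply K \<psi> x > 1 - 3 * \<epsilon>) (at x0)"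
    using \<psi>x0 \<epsilon> unfolding isCont_def by (intro order_tendstoD) auto
  moreover
  define g where "g = (\<lambda>y. f y * \<psi> y)"
  have "isCont (kernel_apply K g) x0" unfolding g_def \<psi>_def
    by (rule C0_isCont[OF C0p[OF bump_mult_C0[OF fc]]])
  hence "eventually (\<lambda>x. dist (kernel_apply K g x) (kernel_apply K g x0) < \<epsilon>) (at x0)"
    using \<epsilon> unfolding isCont_def tendsto_iff by auto
  ultimately show "eventually (\<lambda>x. dist (kernel_apply K f x) (kernel_apply K f x0) < e) (at x0)"
  proof eventually_elim
    case (elim x)
    define h where "h = (\<lambda>y. f y * (1 - \<psi> y))"
    have gm: "g \<in> borel_measurable borel" unfolding g_def using fm \<psi>m by simp
    have hm: "h \<in> borel_measurable borel" unfolding h_def using fm \<psi>m by simp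
    have gb: "\<bar>g y\<bar> \<le> B" for y unfolding g_def using fB[of y] \<psi>b[of y]
      by (simp add: abs_mult mult_le_one mult_le_cancel_left1) (smt (verit) mult_left_le)
    have hb: "\<bar>h y\<bar> \<le> B" for y unfolding h_def using fB[of y] \<psi>b[of y]
      by (simp add: abs_mult) (smt (verit) mult_left_le)
    have split: "kernel_apply K f z = kernel_apply K g z + kernel_apply K h z" for z
    proof -
      have "f = (\<lambda>y. g y + h y)" unfolding g_def h_def by (auto simp: algebra_simps)
      hence "kernel_apply K f z = kernel_apply K (\<lambda>y. g y + h y) z" by simp
      also have "\<dots> = kernel_apply K g z + kernel_apply K h z"
        by (rule Kadd[OF gm gb hm hb])
      finally show ?thesis .
    qed
    have hbound: "\<bar>kernel_apply K h z\<bar> \<le> B * (1 - kernel_apply K \<psi> z)" for z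
    proof -
      have "\<bar>kernel_apply K h z\<bar> \<le> kernel_apply K (\<lambda>y. \<bar>h y\<bar>) z" by (rule Kabs[OF hm hb])
      also have "\<dots> \<le> kernel_apply K (\<lambda>y. B * 1 - B * \<psi> y) z"
      proof (rule Kmono[where B=B and C="B+B"])
        show "(\<lambda>y. \<bar>h y\<bar>) \<in> borel_measurable borel" using hm by measurable
        show "(\<lambda>y. B * 1 - B * \<psi> y) \<in> borel_measurable borel" using \<psi>m by measurable
        show "\<bar>\<bar>h y\<bar>\<bar> \<le> B" for y using hb[of y] by simp
        show "\<bar>B * 1 - B * \<psi> y\<bar> \<le> B + B" for y using \<psi>b[of y] Bpos
          by (smt (verit) mult_left_le mult_nonneg_nonneg)
        show "\<bar>h y\<bar> \<le> B * 1 - B * \<psi> y" for y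
          using \<psi>b[of y] fB[of y]
        proof -
          have "\<bar>f y\<bar> * (1 - \<psi> y) \<le> B * (1 - \<psi> y)"
            using \<psi>b[of y] fB[of y] by (intro mult_right_mono) auto
          moreover have "\<bar>h y\<bar> = \<bar>f y\<bar> * (1 - \<psi> y)" using \<psi>b[of y] by (simp add: h_def abs_mult)
          moreover have "B * (1 - \<psi> y) = B * 1 - B * \<psi> y" by (simp add: right_diff_distrib)
          ultimately show ?thesis by linarith
        qed
      qed
      also have "\<dots> = B * 1 - B * kernel_apply K \<psi> z"
        by (subst Kdiff[where B=B and C=B]) (use \<psi>m \<psi>b Bpos in \<open>auto simp: Kcmult Kconst abs_mult\<close>)
      finally show ?thesis by (simp add: algebra_simps)
    qed
    have "dist (kernel_apply K f x) (kernel_apply K f x0)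
        \<le> dist (kernel_apply K g x) (kernel_apply K g x0) + \<bar>kernel_apply K h x\<bar> + \<bar>kernel_apply K h x0\<bar>"
      unfolding split dist_real_def by linarith
    also have "\<dots> < \<epsilon> + B * (3 * \<epsilon>) + B * (2 * \<epsilon>)"
      using elim hbound[of x] hbound[of x0] \<psi>x0 Bpos
      by (smt (verit) mult_left_mono)
    also have "\<dots> \<le> e"
    proof -
      have "\<epsilon> + B * (3 * \<epsilon>) + B * (2 * \<epsilon>) = e * ((1 + 5 * B) / (6 * B + 6))"
        unfolding \<epsilon>_def by (simp add: field_simps add_divide_distrib)
      moreover have "(1 + 5 * B) / (6 * B + 6) \<le> 1" using Bpos by simp
      moreover have "e * ((1 + 5 * B) / (6 * B + 6)) \<le> e * 1"
        using e \<open>(1 + 5 * B) / (6 * B + 6) \<le> 1\<close> by (intro mult_left_mono) auto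
      ultimately show ?thesis by linarith
    qed
    finally show ?case .
  qed
qed


lemma Kind_mono:
  assumes monop: "\<And>f. f \<in> borel_measurable borel \<Longrightarrow> bounded (range f) \<Longrightarrow> mono f \<Longrightarrow>
           bounded (range (kernel_apply K f)) \<and> mono (kernel_apply K f)"
    and "x \<le> x'"
  shows "kernel_apply K (indicator {a<..}) x \<le> kernel_apply K (indicator {a<..}) x'"
proof -
  have "bounded (range (indicator {a<..} :: real \<Rightarrow> real))"
    unfolding bounded_iff by (intro exI[of _ 1]) (auto simp: indicator_def)
  moreover have "mono (indicator {a<..} :: real \<Rightarrow> real)"
    by (auto simp: mono_def indicator_def)
  ultimately have "mono (kernel_apply K (indicator {a<..}))"
    using monop[OF ind_meas2] by blast
  thus ?thesis using assms(2) by (auto simp: mono_def)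
qed

lemma Ktop:
  fixes f :: "real \<Rightarrow> real"
  assumes C0p: "\<And>f. f \<in> C0 \<Longrightarrow> kernel_apply K f \<in> C0"
    and monop: "\<And>f. f \<in> borel_measurable borel \<Longrightarrow> bounded (range f) \<Longrightarrow> mono f \<Longrightarrow>
           bounded (range (kernel_apply K f)) \<and> mono (kernel_apply K f)"
    and fc: "continuous_on UNIV f" and fB: "\<And>y. \<bar>f y\<bar> \<le> B" and Bpos: "B > 0"
    and lim: "(f \<longlongrightarrow> v) at_top"
  shows "(kernel_apply K f \<longlongrightarrow> v) at_top"
  unfolding tendsto_iff
proof (intro allI impI)
  fix e :: real assume e: "e > 0"
  define D where "D = B + \<bar>v\<bar> + 1"
  have Dpos: "D > 0" using Bpos by (simp add: D_def)
  define \<epsilon> where "\<epsilon> = e / (4 * D + 4)"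
  have \<epsilon>: "\<epsilon> > 0" using e Dpos by (simp add: \<epsilon>_def)
  have fm: "f \<in> borel_measurable borel" by (rule borel_measurable_continuous_onI[OF fc])
  have "eventually (\<lambda>y. dist (f y) v < \<epsilon>) at_top" using lim \<epsilon> by (simp add: tendsto_iff)
  then obtain R where R: "\<And>y. y \<ge> R \<Longrightarrow> \<bar>f y - v\<bar> < \<epsilon>"
    by (auto simp: eventually_at_top_linorder dist_real_def)
  interpret D0: real_distribution "K 0" by (rule Kdist)
  have "eventually (\<lambda>a. cdf (K 0) a < \<epsilon>) at_bot"
    using D0.cdf_lim_at_bot \<epsilon> by (rule order_tendstoD)
  then obtain N1 where N1: "\<And>a. a \<le> N1 \<Longrightarrow> cdf (K 0) a < \<epsilon>"
    by (auto simp: eventually_at_bot_linorder)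
  define a where "a = min N1 R"
  have aR: "a \<le> R" by (simp add: a_def)
  have a1: "cdf (K 0) a < \<epsilon>" by (rule N1) (simp add: a_def)
  define \<psi> where "\<psi> = bump a R"
  have \<psi>1: "\<psi> y = 1" if "a \<le> y" "y \<le> R" for y unfolding \<psi>_def using that by (rule bump_one)
  have \<psi>m: "\<psi> \<in> borel_measurable borel" unfolding \<psi>_def by (rule bump_meas)
  have \<psi>b: "\<bar>\<psi> y\<bar> \<le> 1" "0 \<le> \<psi> y" "\<psi> y \<le> 1" for y unfolding \<psi>_def using bump_bounds by auto
  have "(kernel_apply K \<psi> \<longlongrightarrow> 0) at_top" using C0p[OF bump_C0] unfolding \<psi>_def C0_def by auto
  hence "eventually (\<lambda>x. kernel_apply K \<psi> x < \<epsilon>) at_top" using \<epsilon> by (rule order_tendstoD)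
  moreover have "eventually (\<lambda>x. x \<ge> (0::real)) at_top" by simp
  ultimately show "eventually (\<lambda>x. dist (kernel_apply K f x) v < e) at_top"
  proof eventually_elim
    case (elim x)
    have cdfx: "cdf (K x) a \<le> cdf (K 0) a"
      using Kind_mono[OF monop elim(2), of a] unfolding Kind[symmetric] Kind_compl by simp
    have im: "(indicator {..a} :: real \<Rightarrow> real) \<in> borel_measurable borel" by simp
    have ib: "\<bar>indicator {..a} y :: real\<bar> \<le> 1" for y by (simp add: indicator_def)
    have "kernel_apply K (\<lambda>y. f y - v) x = kernel_apply K f x - v"
      by (subst Kdiff[where B=B and C="\<bar>v\<bar>"]) (use fm fB in \<open>auto simp: Kconst\<close>)
    hence "dist (kernel_apply K f x) v = \<bar>kernel_apply K (\<lambda>y. f y - v) x\<bar>"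
      by (simp add: dist_real_def)
    also have "\<dots> \<le> kernel_apply K (\<lambda>y. \<bar>f y - v\<bar>) x"
      by (rule Kabs[where B="B + \<bar>v\<bar>"]) (use fm fB in \<open>auto intro: abs_triangle_ineq4[THEN order_trans]\<close>)
    also have "\<dots> \<le> kernel_apply K (\<lambda>y. (\<epsilon> + D * indicator {..a} y) + D * \<psi> y) x"
    proof (rule Kmono[where B="B + \<bar>v\<bar>" and C="\<epsilon> + D + D"])
      show "(\<lambda>y. \<bar>f y - v\<bar>) \<in> borel_measurable borel" using fm by measurable
      show "(\<lambda>y. (\<epsilon> + D * indicator {..a} y) + D * \<psi> y) \<in> borel_measurable borel"
        using \<psi>m by measurable
      show "\<bar>\<bar>f y - v\<bar>\<bar> \<le> B + \<bar>v\<bar>" for y using fB[of y] by simp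
      show "\<bar>(\<epsilon> + D * indicator {..a} y) + D * \<psi> y\<bar> \<le> \<epsilon> + D + D" for y
        using \<psi>b[of y] Dpos \<epsilon> by (auto simp: indicator_def intro!: mult_left_le)
      show "\<bar>f y - v\<bar> \<le> (\<epsilon> + D * indicator {..a} y) + D * \<psi> y" for y
      proof -
        have fv: "\<bar>f y - v\<bar> \<le> D" using fB[of y] by (simp add: D_def)
        have "D * \<psi> y \<ge> 0" using \<psi>b[of y] Dpos by simp
        show ?thesis
        proof (cases "y \<ge> R")
          case True thus ?thesis using R[of y] Dpos \<open>D * \<psi> y \<ge> 0\<close> by (simp add: indicator_def)
        next
          case False
          show ?thesis
          proof (cases "y \<le> a")
            case True thus ?thesis using fv \<epsilon> \<open>D * \<psi> y \<ge> 0\<close> by (simp add: indicator_def)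
          next
            case False
            thus ?thesis using fv \<epsilon> \<psi>1[of y] \<open>\<not> y \<ge> R\<close> by (simp add: indicator_def)
          qed
        qed
      qed
    qed
    also have "\<dots> = \<epsilon> + D * cdf (K x) a + D * kernel_apply K \<psi> x"
      apply (subst Kadd[where B="\<epsilon> + D" and C=D])
      using \<psi>m \<psi>b Dpos \<epsilon> apply (auto simp: abs_mult indicator_def intro!: mult_left_le)[4]
      apply (subst Kadd[where B="\<epsilon>" and C=D])
      using \<psi>m \<psi>b Dpos \<epsilon> apply (auto simp: abs_mult indicator_def intro!: mult_left_le)[4]
      apply (simp add: Kconst Kcmult Kind)
      done
    also have "\<dots> < \<epsilon> + D * \<epsilon> + D * \<epsilon>"
      using cdfx a1 elim(1) Dpos by (smt (verit) mult_strict_left_mono mult_left_mono)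
    also have "\<dots> \<le> e"
    proof -
      have "\<epsilon> + D * \<epsilon> + D * \<epsilon> = e * ((1 + 2 * D) / (4 * D + 4))"
        unfolding \<epsilon>_def by (simp add: field_simps add_divide_distrib)
      moreover have "(1 + 2 * D) / (4 * D + 4) \<le> 1" using Dpos by simp
      moreover have "e * ((1 + 2 * D) / (4 * D + 4)) \<le> e * 1"
        using e \<open>(1 + 2 * D) / (4 * D + 4) \<le> 1\<close> by (intro mult_left_mono) auto
      ultimately show ?thesis by linarith
    qed
    finally show ?case .
  qed
qed


lemma Kbot:
  fixes f :: "real \<Rightarrow> real"
  assumes C0p: "\<And>f. f \<in> C0 \<Longrightarrow> kernel_apply K f \<in> C0"
    and monop: "\<And>f. f \<in> borel_measurable borel \<Longrightarrow> bounded (range f) \<Longrightarrow> mono f \<Longrightarrow>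
           bounded (range (kernel_apply K f)) \<and> mono (kernel_apply K f)"
    and fc: "continuous_on UNIV f" and fB: "\<And>y. \<bar>f y\<bar> \<le> B" and Bpos: "B > 0"
    and lim: "(f \<longlongrightarrow> u) at_bot"
  shows "(kernel_apply K f \<longlongrightarrow> u) at_bot"
  unfolding tendsto_iff
proof (intro allI impI)
  fix e :: real assume e: "e > 0"
  define D where "D = B + \<bar>u\<bar> + 1"
  have Dpos: "D > 0" using Bpos by (simp add: D_def)
  define \<epsilon> where "\<epsilon> = e / (4 * D + 4)"
  have \<epsilon>: "\<epsilon> > 0" using e Dpos by (simp add: \<epsilon>_def)
  have fm: "f \<in> borel_measurable borel" by (rule borel_measurable_continuous_onI[OF fc])
  have "eventually (\<lambda>y. dist (f y) u < \<epsilon>) at_bot" using lim \<epsilon> by (simp add: tendsto_iff)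
  then obtain R where R: "\<And>y. y \<le> R \<Longrightarrow> \<bar>f y - u\<bar> < \<epsilon>"
    by (auto simp: eventually_at_bot_linorder dist_real_def)
  interpret D0: real_distribution "K 0" by (rule Kdist)
  have "eventually (\<lambda>a. cdf (K 0) a > 1 - \<epsilon>) at_top"
    using D0.cdf_lim_at_top_prob \<epsilon> by (intro order_tendstoD) auto
  then obtain N1 where N1: "\<And>a. a \<ge> N1 \<Longrightarrow> cdf (K 0) a > 1 - \<epsilon>"
    by (auto simp: eventually_at_top_linorder)
  define a where "a = max N1 R"
  have aR: "R \<le> a" by (simp add: a_def)
  have "cdf (K 0) a > 1 - \<epsilon>" by (rule N1) (simp add: a_def)
  hence a1: "kernel_apply K (indicator {a<..}) 0 < \<epsilon>" using Kind_compl[of a 0] Kind[of a 0] by simp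
  define \<psi> where "\<psi> = bump R a"
  have \<psi>1: "\<psi> y = 1" if "R \<le> y" "y \<le> a" for y unfolding \<psi>_def using that by (rule bump_one)
  have \<psi>m: "\<psi> \<in> borel_measurable borel" unfolding \<psi>_def by (rule bump_meas)
  have \<psi>b: "\<bar>\<psi> y\<bar> \<le> 1" "0 \<le> \<psi> y" "\<psi> y \<le> 1" for y unfolding \<psi>_def using bump_bounds by auto
  have "(kernel_apply K \<psi> \<longlongrightarrow> 0) at_bot" using C0p[OF bump_C0] unfolding \<psi>_def C0_def by auto
  hence "eventually (\<lambda>x. kernel_apply K \<psi> x < \<epsilon>) at_bot" using \<epsilon> by (rule order_tendstoD)
  moreover have "eventually (\<lambda>x. x \<le> (0::real)) at_bot" by simp
  ultimately show "eventually (\<lambda>x. dist (kernel_apply K f x) u < e) at_bot"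
  proof eventually_elim
    case (elim x)
    have cdfx: "kernel_apply K (indicator {a<..}) x \<le> kernel_apply K (indicator {a<..}) 0"
      using Kind_mono[OF monop elim(2), of a] by simp
    have "kernel_apply K (\<lambda>y. f y - u) x = kernel_apply K f x - u"
      by (subst Kdiff[where B=B and C="\<bar>u\<bar>"]) (use fm fB in \<open>auto simp: Kconst\<close>)
    hence "dist (kernel_apply K f x) u = \<bar>kernel_apply K (\<lambda>y. f y - u) x\<bar>"
      by (simp add: dist_real_def)
    also have "\<dots> \<le> kernel_apply K (\<lambda>y. \<bar>f y - u\<bar>) x"
      by (rule Kabs[where B="B + \<bar>u\<bar>"]) (use fm fB in \<open>auto intro: abs_triangle_ineq4[THEN order_trans]\<close>)
    also have "\<dots> \<le> kernel_apply K (\<lambda>y. (\<epsilon> + D * indicator {a<..} y) + D * \<psi> y) x"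
    proof (rule Kmono[where B="B + \<bar>u\<bar>" and C="\<epsilon> + D + D"])
      show "(\<lambda>y. \<bar>f y - u\<bar>) \<in> borel_measurable borel" using fm by measurable
      show "(\<lambda>y. (\<epsilon> + D * indicator {a<..} y) + D * \<psi> y) \<in> borel_measurable borel"
        using \<psi>m by measurable
      show "\<bar>\<bar>f y - u\<bar>\<bar> \<le> B + \<bar>u\<bar>" for y using fB[of y] by simp
      show "\<bar>(\<epsilon> + D * indicator {a<..} y) + D * \<psi> y\<bar> \<le> \<epsilon> + D + D" for y
        using \<psi>b[of y] Dpos \<epsilon> by (auto simp: indicator_def intro!: mult_left_le)
      show "\<bar>f y - u\<bar> \<le> (\<epsilon> + D * indicator {a<..} y) + D * \<psi> y" for y
      proof -
        have fv: "\<bar>f y - u\<bar> \<le> D" using fB[of y] by (simp add: D_def)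
        have "D * \<psi> y \<ge> 0" using \<psi>b[of y] Dpos by simp
        show ?thesis
        proof (cases "y \<le> R")
          case True thus ?thesis using R[of y] Dpos \<open>D * \<psi> y \<ge> 0\<close> aR by (simp add: indicator_def)
        next
          case False
          show ?thesis
          proof (cases "y > a")
            case True thus ?thesis using fv \<epsilon> \<open>D * \<psi> y \<ge> 0\<close> by (simp add: indicator_def)
          next
            case False
            thus ?thesis using fv \<epsilon> \<psi>1[of y] \<open>\<not> y \<le> R\<close> by (simp add: indicator_def)
          qed
        qed
      qed
    qed
    also have "\<dots> = \<epsilon> + D * kernel_apply K (indicator {a<..}) x + D * kernel_apply K \<psi> x"
      apply (subst Kadd[where B="\<epsilon> + D" and C=D])
      using \<psi>m \<psi>b Dpos \<epsilon> apply (auto simp: abs_mult indicator_def intro!: mult_left_le)[4]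
      apply (subst Kadd[where B="\<epsilon>" and C=D])
      using \<psi>m \<psi>b Dpos \<epsilon> apply (auto simp: abs_mult indicator_def intro!: mult_left_le)[4]
      apply (simp add: Kconst Kcmult)
      done
    also have "\<dots> < \<epsilon> + D * \<epsilon> + D * \<epsilon>"
      using cdfx a1 elim(1) Dpos by (smt (verit) mult_strict_left_mono mult_left_mono)
    also have "\<dots> \<le> e"
    proof -
      have "\<epsilon> + D * \<epsilon> + D * \<epsilon> = e * ((1 + 2 * D) / (4 * D + 4))"
        unfolding \<epsilon>_def by (simp add: field_simps add_divide_distrib)
      moreover have "(1 + 2 * D) / (4 * D + 4) \<le> 1" using Dpos by simp
      moreover have "e * ((1 + 2 * D) / (4 * D + 4)) \<le> e * 1"
        using e \<open>(1 + 2 * D) / (4 * D + 4) \<le> 1\<close> by (intro mult_left_mono) auto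
      ultimately show ?thesis by linarith
    qed
    finally show ?case .
  qed
qed

end


lemma Cuv_bounded:
  fixes f :: "real \<Rightarrow> real"
  assumes "f \<in> Cuv u v"
  shows "\<exists>B>0. \<forall>y. \<bar>f y\<bar> \<le> B"
proof -
  have fc: "continuous_on UNIV f" and lu: "(f \<longlongrightarrow> u) at_bot" and lv: "(f \<longlongrightarrow> v) at_top"
    using assms unfolding Cuv_def by auto
  have "eventually (\<lambda>y. dist (f y) v < 1) at_top" using lv by (simp add: tendsto_iff)
  then obtain R where R: "\<And>y. y \<ge> R \<Longrightarrow> \<bar>f y - v\<bar> < 1"
    by (auto simp: eventually_at_top_linorder dist_real_def)
  have "eventually (\<lambda>y. dist (f y) u < 1) at_bot" using lu by (simp add: tendsto_iff)
  then obtain L where L: "\<And>y. y \<le> L \<Longrightarrow> \<bar>f y - u\<bar> < 1"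
    by (auto simp: eventually_at_bot_linorder dist_real_def)
  have "compact (f ` {L..R})"
    by (rule compact_continuous_image[OF continuous_on_subset[OF fc] compact_Icc]) auto
  hence "bounded (f ` {L..R})" by (rule compact_imp_bounded)
  then obtain M where "\<forall>z\<in>f ` {L..R}. norm z \<le> M" unfolding bounded_iff by blast
  hence M: "\<And>y. y \<in> {L..R} \<Longrightarrow> \<bar>f y\<bar> \<le> M" by auto
  show ?thesis
  proof (intro exI[of _ "\<bar>M\<bar> + \<bar>u\<bar> + \<bar>v\<bar> + 1"] conjI allI)
    fix y
    show "\<bar>f y\<bar> \<le> \<bar>M\<bar> + \<bar>u\<bar> + \<bar>v\<bar> + 1"
    proof (cases "y \<le> L")
      case True thus ?thesis using L[of y] by linarith
    next
      case False
      show ?thesis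
      proof (cases "y \<ge> R")
        case True thus ?thesis using R[of y] by linarith
      next
        case False thus ?thesis using M[of y] \<open>\<not> y \<le> L\<close> by auto
      qed
    qed
  qed simp
qed

theorem proposition2p6:
  fixes K :: "real \<Rightarrow> real measure"
  assumes "markov_kernel_R K"
    and "\<And>f. f \<in> C0 \<Longrightarrow> kernel_apply K f \<in> C0"
    and "\<And>f. f \<in> borel_measurable borel \<Longrightarrow> bounded (range f) \<Longrightarrow> mono f \<Longrightarrow>
           bounded (range (kernel_apply K f)) \<and> mono (kernel_apply K f)"
  shows "\<forall>u v f. f \<in> Cuv u v \<longrightarrow> kernel_apply K f \<in> Cuv u v"
proof (intro allI impI)
  fix u v and f :: "real \<Rightarrow> real"
  assume f: "f \<in> Cuv u v"
  obtain B where B: "B > 0" "\<And>y. \<bar>f y\<bar> \<le> B" using Cuv_bounded[OF f] by auto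
  have fc: "continuous_on UNIV f" and lu: "(f \<longlongrightarrow> u) at_bot" and lv: "(f \<longlongrightarrow> v) at_top"
    using f unfolding Cuv_def by auto
  have "continuous_on UNIV (kernel_apply K f)"
    by (intro continuous_at_imp_continuous_on ballI Kcont[OF assms(1,2) fc B(2) B(1)])
  moreover have "(kernel_apply K f \<longlongrightarrow> v) at_top"
    by (rule Ktop[OF assms fc B(2) B(1) lv])
  moreover have "(kernel_apply K f \<longlongrightarrow> u) at_bot"
    by (rule Kbot[OF assms fc B(2) B(1) lu])
  ultimately show "kernel_apply K f \<in> Cuv u v" unfolding Cuv_def by auto
qed

end
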